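(* Let $t$ be an indeterminate and let $\rho''_S: VSB_2\to GL_2(\mathbb{Z}[t^{\pm1}])$ be a representation extending the standard representation of $B_2$, i.e. $\rho''_S(\sigma_1)=\begin{pmatrix}0&t\\1&0\end{pmatrix}$. Then $\rho''_S(\tau_1)=\begin{pmatrix}a&ct\\c&a\end{pmatrix}$ for some $a,c\in\mathbb{Z}[t^{\pm1}]$, and $\rho''_S(\nu_1)$ is one of the following: (1) $\begin{pmatrix}p&q\\ \frac{1-p^2}{q}&-p\end{pmatrix}$ with $p,q\in\mathbb{Z}[t^{\pm1}]$; (2) $\begin{pmatrix}-1&0\\ r&1\end{pmatrix}$ with $r\in\mathbb{Z}[t^{\pm1}]$; (3) $\begin{pmatrix}1&0\\ r&-1\end{pmatrix}$ with $r\in\mathbb{Z}[t^{\pm1}]$; (4) $\begin{pmatrix}-1&0\\ 0&-1\end{pmatrix}$; (5) $\begin{pmatrix}1&0\\ 0&1\end{pmatrix}$.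
   Context: The virtual singular braid group $VSB_2$ is the group generated by $\sigma_1,\tau_1,\nu_1$ subject to the relations $\sigma_1\tau_1=\tau_1\sigma_1$ and $\nu_1^2=1$. It contains the braid group $B_2=\langle\sigma_1\rangle$ and the singular braid group $SB_2=\langle\sigma_1,\tau_1\mid \sigma_1\tau_1=\tau_1\sigma_1\rangle$. The standard representation of $B_2$ sends $\sigma_1$ to $\begin{pmatrix}0&t\\1&0\end{pmatrix}$. In case (1), $q$ is nonzero and the entry $\frac{1-p^2}{q}$ lies in $\mathbb{Z}[t^{\pm1}]$. *)

theory Defs
  imports "HOL-Analysis.Analysis" "HOL-Computational_Algebra.Formal_Laurent_Series"
begin

text \<open>The ring Z[t, t^-1] of integer Laurent polynomials, realised as the subring of
  formal Laurent series over int having only finitely many nonzero coefficients;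
  the indeterminate t is fls_X.\<close>
definition laurent_polys :: "int fls set" where
  "laurent_polys = {f. finite {n. fls_nth f n \<noteq> 0}}"

abbreviation tt :: "int fls" where "tt \<equiv> fls_X"

definition mat2 :: "'a::zero \<Rightarrow> 'a \<Rightarrow> 'a \<Rightarrow> 'a \<Rightarrow> 'a^2^2" where
  "mat2 a b c d = vector [vector [a, b], vector [c, d]]"

definition GL2_laurent :: "((int fls)^2^2) set" where
  "GL2_laurent = {M. (\<forall>i j. vec_nth (vec_nth M i) j \<in> laurent_polys) \<and>
      (\<exists>u\<in>laurent_polys. det M * u = 1)}"

end

theory Submission imports Defs begin
lemma mat2_nth: "mat2 a b c d $ 1 $ 1 = a" "mat2 a b c d $ 1 $ 2 = b" "mat2 a b c d $ 2 $ 1 = c" "mat2 a b c d $ 2 $ 2 = d"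
  by (simp_all add: mat2_def vector_2)
lemma mat2_eta: "(M::'a::zero^2^2) = mat2 (M$1$1) (M$1$2) (M$2$1) (M$2$2)"
  by (simp add: vec_eq_iff forall_2 mat2_nth)
lemma mat2_eq: "(mat2 a b c d = (mat2 a' b' c' d' :: 'a::zero^2^2)) \<longleftrightarrow> a = a' \<and> b = b' \<and> c = c' \<and> d = d'"
  by (auto simp: vec_eq_iff forall_2 mat2_nth)
lemma mat2_mult: "mat2 a b c d ** mat2 e f g h = (mat2 (a*e+b*g) (a*f+b*h) (c*e+d*g) (c*f+d*h) :: 'a::semiring_1^2^2)"
  by (simp add: vec_eq_iff forall_2 mat2_nth matrix_matrix_mult_def sum_2)
lemma mat1: "(mat 1 :: 'a::semiring_1^2^2) = mat2 1 0 0 1"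
  by (simp add: vec_eq_iff forall_2 mat2_nth mat_def)
lemma sq1: "(p::int fls)^2 = 1 \<Longrightarrow> p = 1 \<or> p = -1"
  by (metis power2_eq_1_iff)
lemma two: "(r::int fls) * 2 = 0 \<Longrightarrow> r = 0" by simp
lemma tX: "(tt::int fls) \<noteq> 0" by simp
lemma tw1: "(r::int fls) * (1 + 1) = 0 \<Longrightarrow> r = 0" using two by (simp only: one_add_one)
lemma tw2: "(r::int fls) * (-1 + -1) = 0 \<Longrightarrow> r = 0"
proof -
  assume "r * (-1 + -1) = 0"
  hence "- (r * (1 + 1)) = 0" by (simp only: minus_add_distrib[symmetric] mult_minus_right)
  thus ?thesis using tw1 by simp
qed

lemma GL_entries: "M \<in> GL2_laurent \<Longrightarrow> vec_nth (vec_nth M i) j \<in> laurent_polys"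
  unfolding GL2_laurent_def by blast
lemma B: "mat2 0 tt 1 0 ** mat2 a b c d = mat2 a b c d ** mat2 0 tt 1 0 \<Longrightarrow> tt * c = b \<and> tt * d = a * tt"
  unfolding mat2_mult mat2_eq by (simp only: mult_zero_left mult_zero_right add_0_left add_0_right mult_1_left mult_1_right)
lemma B2: "tt * (d::int fls) = a * tt \<Longrightarrow> d = a"
  by (metis mult.commute mult_cancel_left tX)

theorem theorem5p1:
  fixes S T N :: "(int fls)^2^2"
  assumes "S = mat2 0 tt 1 0"
    and "T \<in> GL2_laurent" and "N \<in> GL2_laurent"
    and "S ** T = T ** S"
    and "N ** N = mat 1"
  shows "(\<exists>a\<in>laurent_polys. \<exists>c\<in>laurent_polys. T = mat2 a (c * tt) c a) \<and>
    ((\<exists>p\<in>laurent_polys. \<exists>q\<in>laurent_polys. \<exists>r\<in>laurent_polys.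
        q \<noteq> 0 \<and> r * q = 1 - p ^ 2 \<and> N = mat2 p q r (- p))
     \<or> (\<exists>r\<in>laurent_polys. N = mat2 (-1) 0 r 1)
     \<or> (\<exists>r\<in>laurent_polys. N = mat2 1 0 r (-1))
     \<or> N = mat2 (-1) 0 0 (-1)
     \<or> N = mat2 1 0 0 1)"
proof
  obtain a b c d where T: "T = mat2 a b c d" using mat2_eta by blast
  have Tl: "a \<in> laurent_polys" "c \<in> laurent_polys"
    using GL_entries[OF assms(2), of 1 1] GL_entries[OF assms(2), of 2 1] by (simp_all add: T mat2_nth)
  have e: "tt * c = b" "tt * d = a * tt" using B assms(4) unfolding assms(1) T by blast+
  have "d = a" using B2 e(2) .
  hence "T = mat2 a (c * tt) c a" using T e(1) by (simp only: mult.commute)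
  thus "\<exists>a\<in>laurent_polys. \<exists>c\<in>laurent_polys. T = mat2 a (c * tt) c a"
    using Tl by blast
next
  obtain p q r s where N: "N = mat2 p q r s" using mat2_eta by blast
  have Nl: "p \<in> laurent_polys" "q \<in> laurent_polys" "r \<in> laurent_polys" "s \<in> laurent_polys"
    using GL_entries[OF assms(3), of 1 1] GL_entries[OF assms(3), of 1 2]
      GL_entries[OF assms(3), of 2 1] GL_entries[OF assms(3), of 2 2] by (simp_all add: N mat2_nth)
  have "N ** N = mat 1" by fact
  hence e: "p*p + q*r = 1" "p*q+q * s = 0" "r*p+s * r = 0" "r*q+s * s = 1"
    unfolding N mat2_mult mat1 mat2_eq by simp_all
  show "(\<exists>p\<in>laurent_polys. \<exists>q\<in>laurent_polys. \<exists>r\<in>laurent_polys.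
        q \<noteq> 0 \<and> r * q = 1 - p ^ 2 \<and> N = mat2 p q r (- p))
     \<or> (\<exists>r\<in>laurent_polys. N = mat2 (-1) 0 r 1)
     \<or> (\<exists>r\<in>laurent_polys. N = mat2 1 0 r (-1))
     \<or> N = mat2 (-1) 0 0 (-1)
     \<or> N = mat2 1 0 0 1"
  proof (cases "q = 0")
    case False
    from e(2) have "q * (p + s) = 0" by (simp add: algebra_simps)
    with False have "s = -p" by (simp add: add_eq_0_iff)
    moreover have "r * q = 1 - p^2" using e(1) by (simp add: algebra_simps power2_eq_square)
    ultimately show ?thesis using False Nl N by blast
  next
    case True
    have p: "p = 1 \<or> p = -1" using e(1) True by (intro sq1) (simp add: power2_eq_square)
    have s: "s = 1 \<or> s = -1" using e(4) True by (intro sq1) (simp add: power2_eq_square)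
    have rr: "r * (p + s) = 0" using e(3) by (simp add: algebra_simps)
    show ?thesis
    proof -
      { assume "p = 1" "s = 1" hence "r = 0" using rr tw1 by simp
        hence ?thesis using N True \<open>p = 1\<close> \<open>s = 1\<close> by simp }
      moreover
      { assume "p = -1" "s = -1" hence "r = 0" using rr tw2 by simp
        hence ?thesis using N True \<open>p = -1\<close> \<open>s = -1\<close> by simp }
      moreover
      { assume "p = 1" "s = -1" hence ?thesis using N True Nl by blast }
      moreover
      { assume "p = -1" "s = 1" hence ?thesis using N True Nl by blast }
      ultimately show ?thesis using p s by blast
    qed
  qed
qed

end
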